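(* Let $m>0$, $a_1,a_2\in\mathbb{R}$, $b_0,b_1,b_2\in\mathbb{R}\setminus\{0\}$. Suppose the equation $$\gamma(a_1-\gamma)(a_2-\gamma)J(\gamma)=b_0+b_1\gamma+b_2\gamma^2,\qquad\gamma\in D,$$ has exactly three distinct solutions $\gamma_0,\gamma_1,\gamma_2\in D$. Set $\beta_0=-\gamma_0\gamma_1\gamma_2$, $\beta_1=\gamma_0\gamma_1+\gamma_0\gamma_2+\gamma_1\gamma_2$, $\beta_2=-(\gamma_0+\gamma_1+\gamma_2)$. Then $\beta_0,\beta_1,\beta_2\in\mathbb{R}$; the polynomial $P(M)=M^3+\beta_2M^2+\beta_1M+\beta_0$ has no zeros in $[4m^2,\infty)$; and the functions $\mathfrak h_0,\mathfrak h_1,\mathfrak h_2\in W^{2,2}(\mathbb R)\subset C^1(\mathbb R)$ defined (via Fourier transform, $M=p^2+4m^2$) by $$b_2\hat{\mathfrak h}_2=\Big(\frac{M(M-a_1)(M-a_2)}{P(M)}-1\Big)\hat{\check\rho},\quad b_1\hat{\mathfrak h}_1=-\frac{M\beta_1+\beta_0}{M^2}(\hat{\check\rho}+b_2\hat{\mathfrak h}_2)+\frac{a_1a_2}{M}\hat{\check\rho},\quad b_0\hat{\mathfrak h}_0=-\frac{\beta_0}{M}(\hat{\check\rho}+b_2\hat{\mathfrak h}_2)$$ satisfy $\mathfrak h_0(0)=\mathfrak h_1(0)=\mathfrak h_2(0)=1$.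
   Context: $\rho(M)=\frac{1}{16\pi^2}\sqrt{1-\frac{4m^2}{M}}\frac1M$ for $M\ge4m^2$; $\check\rho(z)=\int_{\mathbb{R}}\rho(p^2+4m^2)|p|e^{\mathrm ipz}dp$; Fourier transform $\hat f(p)=\int e^{-\mathrm ipz}f(z)dz$. $J(z):=\int_{4m^2}^\infty\frac{\rho(M)}{M-z}dM$ for $z\in D:=\{z\in\mathbb{C}:\ \mathrm{Im}\,z\ne0\}\cup\{z\in\mathbb{R}: z<4m^2\}$. *)

theory Defs
  imports "HOL-Analysis.Analysis"
begin

definition rho :: "real \<Rightarrow> real \<Rightarrow> real" where
  "rho m M = (if 4 * m^2 \<le> M then 1 / (16 * pi^2) * sqrt (1 - 4 * m^2 / M) / M else 0)"

definition J :: "real \<Rightarrow> complex \<Rightarrow> complex" where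
  "J m z = (LBINT M:{4 * m^2..}. complex_of_real (rho m M) / (complex_of_real M - z))"

definition D :: "real \<Rightarrow> complex set" where
  "D m = {z. Im z \<noteq> 0} \<union> {z. Im z = 0 \<and> Re z < 4 * m^2}"

text \<open>Fourier transform (convention hat f(p) = int e^(-ipz) f(z) dz) of
  check rho(z) = int rho(p^2+4m^2) |p| e^(ipz) dp, i.e. 2 pi rho(p^2+4m^2)|p|.\<close>
definition rhocheck_hat :: "real \<Rightarrow> real \<Rightarrow> complex" where
  "rhocheck_hat m p = complex_of_real (2 * pi * rho m (p^2 + 4 * m^2) * \<bar>p\<bar>)"

definition inv_fourier :: "(real \<Rightarrow> complex) \<Rightarrow> real \<Rightarrow> complex" where
  "inv_fourier g z = (1 / (2 * pi)) * (LINT p|lborel. g p * exp (\<i> * complex_of_real (p * z)))"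

text \<open>g is the Fourier transform of a W^{2,2}(R) function: (1+p^2) g(p) is in L^2.\<close>
definition W22_hat :: "(real \<Rightarrow> complex) \<Rightarrow> bool" where
  "W22_hat g \<longleftrightarrow> g \<in> borel_measurable lborel \<and>
     integrable lborel (\<lambda>p. (norm ((1 + p^2) * g p))^2)"

end

theory Submission
  imports Defs "HOL-Probability.Sinc_Integral"
begin

lemma inv1p2_int: "integrable lborel (\<lambda>p::real. inverse (1 + p^2))"
  using integrable_inverse_1_plus_square unfolding set_integrable_def by simp

lemma rho_bounds:
  assumes "m > 0" "4*m^2 \<le> M"
  shows "0 \<le> rho m M" "rho m M \<le> 1 / (16*pi^2*M)"
proof -
  have M: "M > 0" using assms by (smt (verit) zero_less_power)
  have s1: "0 \<le> 1 - 4*m^2/M" "1 - 4*m^2/M \<le> 1" using assms M by (auto simp: field_simps)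
  then have "sqrt (1 - 4*m^2/M) \<le> 1" "0 \<le> sqrt (1 - 4*m^2/M)" by auto
  then show "0 \<le> rho m M" "rho m M \<le> 1 / (16*pi^2*M)"
    using assms M unfolding rho_def by (auto simp: field_simps)
qed

lemma rho_at_c: "m > 0 \<Longrightarrow> rho m (4*m^2) = 0"
  unfolding rho_def by simp

lemma rc_bound:
  assumes "m > 0"
  shows "norm (rhocheck_hat m p) \<le> \<bar>p\<bar> / (8*pi*(p^2+4*m^2))"
proof -
  let ?M = "p^2+4*m^2"
  have M: "?M > 0" using assms by (smt (verit) zero_le_power2 zero_less_power)
  have b: "0 \<le> rho m ?M" "rho m ?M \<le> 1 / (16*pi^2*?M)" using rho_bounds[OF assms, of ?M] by auto
  have "norm (rhocheck_hat m p) = 2*pi*rho m ?M*\<bar>p\<bar>"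
    unfolding rhocheck_hat_def norm_of_real using b by (simp add: abs_mult)
  also have "\<dots> \<le> 2*pi*(1 / (16*pi^2*?M))*\<bar>p\<bar>"
    using b by (intro mult_right_mono mult_left_mono) auto
  also have "\<dots> = \<bar>p\<bar> / (8*pi*?M)"
  proof -
    have "2*pi*(1 / (16*pi^2*X))*a = a/(8*pi*X)" if "X > 0" for X a :: real
      using that pi_gt_zero by (simp add: field_simps power2_eq_square)
    then show ?thesis using M by blast
  qed
  finally show ?thesis .
qed

lemma dist_D:
  assumes "m > 0" "\<gamma> \<in> D m"
  shows "\<exists>\<epsilon>>0. \<forall>M. 4*m^2 \<le> M \<longrightarrow> \<epsilon> * M \<le> norm (complex_of_real M - \<gamma>)"
proof (cases "Im \<gamma> = 0")
  case False
  define x where "x = Re \<gamma>"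
  define y where "y = Im \<gamma>"
  have y: "\<bar>y\<bar> > 0" using False y_def by simp
  show ?thesis
  proof (intro exI[of _ "1/(1+\<bar>x\<bar>/\<bar>y\<bar>)"] conjI allI impI)
    show "0 < 1/(1+\<bar>x\<bar>/\<bar>y\<bar>)" using y by (simp add: add_pos_nonneg)
    fix M :: real assume "4*m^2 \<le> M"
    let ?n = "norm (complex_of_real M - \<gamma>)"
    have n1: "\<bar>M - x\<bar> \<le> ?n" using abs_Re_le_cmod[of "complex_of_real M - \<gamma>"] x_def by simp
    have n2: "\<bar>y\<bar> \<le> ?n" using abs_Im_le_cmod[of "complex_of_real M - \<gamma>"] y_def by simp
    have "M \<le> \<bar>M - x\<bar> + \<bar>x\<bar>" by simp
    also have "\<bar>x\<bar> = (\<bar>x\<bar>/\<bar>y\<bar>) * \<bar>y\<bar>" using y by simp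
    also have "(\<bar>x\<bar>/\<bar>y\<bar>) * \<bar>y\<bar> \<le> (\<bar>x\<bar>/\<bar>y\<bar>) * ?n" using n2 by (intro mult_left_mono) auto
    finally have "M \<le> (1 + \<bar>x\<bar>/\<bar>y\<bar>) * ?n" using n1 by (simp add: algebra_simps)
    then show "1/(1+\<bar>x\<bar>/\<bar>y\<bar>) * M \<le> ?n"
      using y by (simp add: field_simps add_pos_nonneg)
  qed
next
  case True
  define x where "x = Re \<gamma>"
  have xc: "x < 4*m^2" using assms(2) True unfolding D_def x_def by auto
  have c: "4*m^2 > 0" using assms by simp
  have g: "\<gamma> = complex_of_real x" using True x_def by (simp add: complex_eq_iff)
  show ?thesis
  proof (cases "x \<le> 0")
    case True
    show ?thesis
    proof (intro exI[of _ 1] conjI allI impI)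
      fix M :: real assume "4*m^2 \<le> M"
      have "norm (complex_of_real M - \<gamma>) = \<bar>M - x\<bar>" unfolding g
        by (metis norm_of_real of_real_diff)
      then show "1 * M \<le> norm (complex_of_real M - \<gamma>)" using True by simp
    qed simp
  next
    case False
    show ?thesis
    proof (intro exI[of _ "(4*m^2 - x)/(4*m^2)"] conjI allI impI)
      show "0 < (4*m^2 - x)/(4*m^2)" using xc c by simp
      fix M :: real assume M: "4*m^2 \<le> M"
      have n: "norm (complex_of_real M - \<gamma>) = \<bar>M - x\<bar>" unfolding g
        by (metis norm_of_real of_real_diff)
      have xx: "x * M / (4*m^2) \<ge> x" using False M c by (simp add: field_simps)
      have "(4*m^2 - x)/(4*m^2) * M = M - x * M / (4*m^2)" using c by (simp add: field_simps)
      also have "\<dots> \<le> M - x" using xx by simp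
      also have "\<dots> = norm (complex_of_real M - \<gamma>)" using n xc M by simp
      finally show "(4*m^2 - x)/(4*m^2) * M \<le> norm (complex_of_real M - \<gamma>)" .
    qed
  qed
qed

lemma cv_half:
  fixes F :: "real \<Rightarrow> complex" and c :: real and S :: "real set"
  assumes S: "S = {0<..} \<or> S = {..<0}"
    and Fm: "F \<in> borel_measurable borel"
    and int: "set_integrable lborel S (\<lambda>x. \<bar>2*x\<bar> *\<^sub>R F (x^2+c))"
  shows "set_integrable lborel {c<..} F \<and> (LBINT x:S. \<bar>2*x\<bar> *\<^sub>R F (x^2+c)) = (LBINT M:{c<..}. F M)"
proof -
  let ?g = "\<lambda>x::real. x^2 + c"
  have Sl: "S \<in> sets lebesgue" using S by auto
  have der: "(?g has_field_derivative 2*x) (at x within S)" for x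
    by (auto intro!: derivative_eq_intros)
  have inj: "inj_on ?g S"
  proof (rule inj_onI)
    fix x y assume "x \<in> S" "y \<in> S" "x^2+c = y^2+c"
    then have "x^2 = y^2" by simp
    then have "\<bar>x\<bar> = \<bar>y\<bar>" using power2_eq_iff by fastforce
    then show "x = y" using S \<open>x \<in> S\<close> \<open>y \<in> S\<close> by auto
  qed
  have img: "?g ` S = {c<..}"
  proof
    show "?g ` S \<subseteq> {c<..}" using S by auto
    show "{c<..} \<subseteq> ?g ` S"
    proof
      fix M assume "M \<in> {c<..}"
      then have M: "M - c > 0" by simp
      show "M \<in> ?g ` S"
      proof (cases "S = {0<..}")
        case True
        then show ?thesis using M by (intro image_eqI[of _ _ "sqrt (M-c)"]) auto
      next
        case False
        then have "S = {..<0}" using S by auto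
        then show ?thesis using M by (intro image_eqI[of _ _ "- sqrt (M-c)"]) auto
      qed
    qed
  qed
  have meas1: "(\<lambda>x. indicator S x *\<^sub>R (\<bar>2*x\<bar> *\<^sub>R F (x^2+c))) \<in> borel_measurable lborel"
    using S Fm by (auto intro!: borel_measurable_indicator measurable_compose[OF _ Fm])
  have meas2: "(\<lambda>x. indicator {c<..} x *\<^sub>R F x) \<in> borel_measurable lborel"
    using Fm by auto
  have aint: "(\<lambda>x. \<bar>2*x\<bar> *\<^sub>R F (x^2+c)) absolutely_integrable_on S"
    using int meas1 unfolding set_integrable_def by (simp add: integrable_completion)
  from has_absolute_integral_change_of_variables_real[OF Sl der inj, of F "integral S (\<lambda>x. \<bar>2*x\<bar> *\<^sub>R F (x^2+c))"] aint img
  have F1: "F absolutely_integrable_on {c<..}" and F2: "integral {c<..} F = integral S (\<lambda>x. \<bar>2*x\<bar> *\<^sub>R F (x^2+c))"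
    by auto
  have Fi: "set_integrable lborel {c<..} F"
    using F1 meas2 unfolding set_integrable_def by (simp add: integrable_completion)
  show ?thesis
    using Fi F2 set_borel_integral_eq_integral(2)[OF Fi] set_borel_integral_eq_integral(2)[OF int] by simp
qed

lemma cv_full:
  fixes F :: "real \<Rightarrow> complex" and c :: real
  assumes Fm: "F \<in> borel_measurable borel"
    and int: "integrable lborel (\<lambda>x. \<bar>x\<bar> *\<^sub>R F (x^2+c))"
  shows "set_integrable lborel {c<..} F \<and> (LINT x|lborel. \<bar>x\<bar> *\<^sub>R F (x^2+c)) = (LBINT M:{c<..}. F M)"
proof -
  have int2: "integrable lborel (\<lambda>x. \<bar>2*x\<bar> *\<^sub>R F (x^2+c))"
    using integrable_scaleR_right[OF int, of 2] by (simp add: abs_mult)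
  have si: "set_integrable lborel S (\<lambda>x. \<bar>2*x\<bar> *\<^sub>R F (x^2+c))" if "S = {0<..} \<or> S = {..<0}" for S
    unfolding set_integrable_def by (rule integrable_mult_indicator) (use that int2 in auto)
  have A: "set_integrable lborel {c<..} F" "(LBINT x:{0<..}. \<bar>2*x\<bar> *\<^sub>R F (x^2+c)) = (LBINT M:{c<..}. F M)"
    using cv_half[OF _ Fm si[of "{0<..}"]] by auto
  have B: "(LBINT x:{..<0}. \<bar>2*x\<bar> *\<^sub>R F (x^2+c)) = (LBINT M:{c<..}. F M)"
    using cv_half[OF _ Fm si[of "{..<0}"]] by auto
  have pw: "\<bar>x\<bar> *\<^sub>R F (x^2+c) = (1/2::real) *\<^sub>R (indicator {0<..} x *\<^sub>R (\<bar>2*x\<bar> *\<^sub>R F (x^2+c)))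
     + (1/2::real) *\<^sub>R (indicator {..<0} x *\<^sub>R (\<bar>2*x\<bar> *\<^sub>R F (x^2+c)))" for x
    by (cases "x > 0"; cases "x < 0") (auto simp: indicator_def abs_mult)
  have "(LINT x|lborel. \<bar>x\<bar> *\<^sub>R F (x^2+c)) = 
     (LINT x|lborel. (1/2::real) *\<^sub>R (indicator {0<..} x *\<^sub>R (\<bar>2*x\<bar> *\<^sub>R F (x^2+c)))
     + (1/2::real) *\<^sub>R (indicator {..<0} x *\<^sub>R (\<bar>2*x\<bar> *\<^sub>R F (x^2+c))))"
    by (subst pw) (rule refl)
  also have "\<dots> = (1/2::real) *\<^sub>R (LBINT x:{0<..}. \<bar>2*x\<bar> *\<^sub>R F (x^2+c)) + (1/2::real) *\<^sub>R (LBINT x:{..<0}. \<bar>2*x\<bar> *\<^sub>R F (x^2+c))"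
  proof -
    have I1: "integrable lborel (\<lambda>x. indicator {0<..} x *\<^sub>R (\<bar>2*x\<bar> *\<^sub>R F (x^2+c)))"
      using si[of "{0<..}"] unfolding set_integrable_def by simp
    have I2: "integrable lborel (\<lambda>x. indicator {..<0} x *\<^sub>R (\<bar>2*x\<bar> *\<^sub>R F (x^2+c)))"
      using si[of "{..<0}"] unfolding set_integrable_def by simp
    show ?thesis unfolding set_lebesgue_integral_def
      using Bochner_Integration.integral_add[OF integrable_scaleR_right[OF I1, of "1/2"] integrable_scaleR_right[OF I2, of "1/2"]]
      by (simp only: Bochner_Integration.integral_scaleR_right)
  qed
  also have "\<dots> = (LBINT M:{c<..}. F M)" using A B by (simp add: scaleR_add_left[symmetric])
  finally show ?thesis using A by simp
qed


lemma rho_meas[measurable]: "rho m \<in> borel_measurable borel"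
  unfolding rho_def by measurable

lemma aux_k:
  fixes p c :: real
  assumes "c > 0"
  shows "min 1 c * (1+p^2) \<le> p^2 + c"
proof (cases "c \<le> 1")
  case True
  then have "c * p^2 \<le> 1 * p^2" by (intro mult_right_mono) auto
  then show ?thesis using True by (simp add: algebra_simps)
qed simp

lemma aux_inv:
  fixes p c :: real
  assumes "c > 0"
  shows "1/(p^2+c) \<le> (1/min 1 c) * inverse (1+p^2)"
proof -
  have k: "min 1 c > 0" using assms by simp
  have "min 1 c * (1+p^2) \<le> p^2 + c"
  proof (cases "c \<le> 1")
    case True
    then have "c * p^2 \<le> 1 * p^2" by (intro mult_right_mono) auto
    then show ?thesis using True by (simp add: algebra_simps)
  qed simp
  moreover have "0 < min 1 c * (1+p^2)"
    using k by (intro mult_pos_pos) (auto intro: add_pos_nonneg)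
  ultimately have "1/(p^2+c) \<le> 1/(min 1 c * (1+p^2))"
    by (intro frac_le) auto
  also have "\<dots> = (1/min 1 c) * inverse (1+p^2)" by (simp add: field_simps)
  finally show ?thesis .
qed

lemma INT:
  assumes m: "m > 0" and g: "\<gamma> \<in> D m"
  shows "integrable lborel (\<lambda>p. rhocheck_hat m p / (complex_of_real (p^2+4*m^2) - \<gamma>))"
    and "(LINT p|lborel. rhocheck_hat m p / (complex_of_real (p^2+4*m^2) - \<gamma>)) = 2 * pi * J m \<gamma>"
proof -
  define c where "c = 4*m^2"
  have c: "c > 0" using m c_def by simp
  define F where "F = (\<lambda>M. complex_of_real (rho m M) / (complex_of_real M - \<gamma>))"
  obtain \<epsilon> where e: "\<epsilon> > 0" "\<And>M. c \<le> M \<Longrightarrow> \<epsilon> * M \<le> norm (complex_of_real M - \<gamma>)"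
    using dist_D[OF m g] c_def by auto
  have Fm: "F \<in> borel_measurable borel" unfolding F_def by measurable
  have pw: "rhocheck_hat m p / (complex_of_real (p^2+c) - \<gamma>) = complex_of_real (2*pi) * (\<bar>p\<bar> *\<^sub>R F (p^2+c))" for p
    unfolding rhocheck_hat_def F_def c_def by (simp add: scaleR_conv_of_real)
  define K where "K = (1/(16*pi^2*\<epsilon>)) * (1/min 1 c)^2"
  have Fb: "norm (\<bar>p\<bar> *\<^sub>R F (p^2+c)) \<le> K * inverse (1+p^2)" for p
  proof -
    let ?M = "p^2+c"
    have M: "?M > 0" "c \<le> ?M" using c by (auto intro: add_nonneg_pos)
    have r: "0 \<le> rho m ?M" "rho m ?M \<le> 1/(16*pi^2*?M)" using rho_bounds[OF m, of ?M] M c_def by auto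
    have nz: "\<epsilon> * ?M > 0" using e M by simp
    have "norm (\<bar>p\<bar> *\<^sub>R F ?M) = \<bar>p\<bar> * (rho m ?M / norm (complex_of_real ?M - \<gamma>))"
      unfolding F_def using r by (simp add: norm_divide)
    also have "\<dots> \<le> \<bar>p\<bar> * ((1/(16*pi^2*?M)) / (\<epsilon> * ?M))"
      using r nz e(2)[OF M(2)] M by (intro mult_left_mono frac_le) auto
    also have "\<dots> = (1/(16*pi^2*\<epsilon>)) * (\<bar>p\<bar> / ?M^2)" by (simp add: field_simps power2_eq_square)
    also have "\<dots> \<le> (1/(16*pi^2*\<epsilon>)) * ((1/min 1 c)^2 * inverse (1+p^2))"
    proof (intro mult_left_mono)
      have a: "\<bar>p\<bar> \<le> 1 + p^2"
        using zero_le_power2[of "\<bar>p\<bar> - 1/2"] by (simp add: power2_eq_square algebra_simps abs_mult_self)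
      have i: "1/?M \<le> (1/min 1 c) * inverse (1+p^2)" by (rule aux_inv[OF c])
      have "1 + p^2 \<le> ?M * (1/min 1 c)"
        using aux_k[OF c, of p] c by (simp add: pos_le_divide_eq mult.commute)
      then have "\<bar>p\<bar> \<le> ?M * (1/min 1 c)" using a by linarith
      then have "\<bar>p\<bar> / ?M^2 \<le> (?M * (1/min 1 c)) / ?M^2" using M by (intro divide_right_mono) auto
      also have "\<dots> = (1/min 1 c) * (1/?M)" using M by (simp add: power2_eq_square)
      also have "\<dots> \<le> (1/min 1 c) * ((1/min 1 c) * inverse (1+p^2))"
        using i c by (intro mult_left_mono) auto
      finally show "\<bar>p\<bar> / ?M^2 \<le> (1/min 1 c)^2 * inverse (1+p^2)" by (simp add: power2_eq_square)
    qed (use e in auto)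
    finally show ?thesis unfolding K_def by (simp add: mult.assoc)
  qed
  have int1: "integrable lborel (\<lambda>p. \<bar>p\<bar> *\<^sub>R F (p^2+c))"
  proof (rule Bochner_Integration.integrable_bound)
    show "integrable lborel (\<lambda>p. K * inverse (1+p^2))" using inv1p2_int by simp
    show "(\<lambda>p. \<bar>p\<bar> *\<^sub>R F (p^2+c)) \<in> borel_measurable lborel" using Fm by measurable
    show "AE p in lborel. norm (\<bar>p\<bar> *\<^sub>R F (p^2+c)) \<le> norm (K * inverse (1+p^2))"
      using Fb by (auto intro: order_trans[OF _ abs_ge_self])
  qed
  have cv: "(LINT x|lborel. \<bar>x\<bar> *\<^sub>R F (x^2+c)) = (LBINT M:{c<..}. F M)"
    using cv_full[OF Fm int1] by simp
  have Jeq: "J m \<gamma> = (LBINT M:{c<..}. F M)"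
  proof -
    have "indicator {c..} M *\<^sub>R F M = indicator {c<..} M *\<^sub>R F M" for M
      using rho_at_c[OF m] unfolding F_def c_def by (cases "M = 4*m^2") (auto simp: indicator_def)
    then show ?thesis unfolding J_def set_lebesgue_integral_def
      by (intro Bochner_Integration.integral_cong refl) (simp add: F_def c_def)
  qed
  have eqf: "(\<lambda>p. rhocheck_hat m p / (complex_of_real (p^2+4*m^2) - \<gamma>)) = (\<lambda>p. complex_of_real (2*pi) * (\<bar>p\<bar> *\<^sub>R F (p^2+c)))"
    by (rule ext) (use pw in \<open>simp add: c_def\<close>)
  show "integrable lborel (\<lambda>p. rhocheck_hat m p / (complex_of_real (p^2+4*m^2) - \<gamma>))"
    unfolding eqf by (rule integrable_mult_right) (rule int1)
  show "(LINT p|lborel. rhocheck_hat m p / (complex_of_real (p^2+4*m^2) - \<gamma>)) = 2 * pi * J m \<gamma>"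
    unfolding eqf Bochner_Integration.integral_mult_right_zero cv Jeq by simp
qed


lemma W22_crit:
  fixes h :: "real \<Rightarrow> complex"
  assumes c: "c > 0" and hm: "h \<in> borel_measurable borel"
    and hb: "\<And>p. norm (h p) * (1+p^2) \<le> C * \<bar>p\<bar> / (p^2+c)"
  shows "W22_hat h"
  unfolding W22_hat_def
proof
  show "h \<in> borel_measurable lborel" using hm by simp
  show "integrable lborel (\<lambda>p. (cmod (complex_of_real (1 + p\<^sup>2) * h p))\<^sup>2)"
  proof (rule Bochner_Integration.integrable_bound)
    show "integrable lborel (\<lambda>p. (C^2 * (1/min 1 c)) * inverse (1+p^2))" using inv1p2_int by simp
    show "(\<lambda>p. (cmod (complex_of_real (1 + p\<^sup>2) * h p))\<^sup>2) \<in> borel_measurable lborel" using hm by measurable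
    show "AE p in lborel. norm ((cmod (complex_of_real (1 + p\<^sup>2) * h p))\<^sup>2) \<le> norm ((C^2 * (1/min 1 c)) * inverse (1+p^2))"
    proof (rule AE_I2)
      fix p :: real
      have M: "p^2 + c > 0" using c by (simp add: add_nonneg_pos)
      have pp: "1 + p^2 > 0" by (simp add: add_pos_nonneg)
      have n: "cmod (complex_of_real (1 + p\<^sup>2) * h p) = norm (h p) * (1+p^2)"
        unfolding norm_mult norm_of_real using pp by (simp add: mult.commute)
      have "0 \<le> norm (h p) * (1+p^2)" using pp by simp
      then have "(norm (h p) * (1+p^2))^2 \<le> (C * \<bar>p\<bar> / (p^2+c))^2"
        using hb[of p] by (intro power_mono) auto
      also have "\<dots> = C^2 * (p^2 / (p^2+c)^2)" by (simp add: power_divide power_mult_distrib)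
      also have "\<dots> \<le> C^2 * (1/(p^2+c))"
      proof (intro mult_left_mono)
        have "p^2 / (p^2+c)^2 \<le> (p^2+c) / (p^2+c)^2" using M c by (intro divide_right_mono) auto
        also have "\<dots> = 1/(p^2+c)" using M by (simp add: power2_eq_square)
        finally show "p^2 / (p^2+c)^2 \<le> 1/(p^2+c)" .
      qed simp
      also have "\<dots> \<le> C^2 * ((1/min 1 c) * inverse (1+p^2))"
        by (intro mult_left_mono aux_inv c) simp
      finally show "norm ((cmod (complex_of_real (1 + p\<^sup>2) * h p))\<^sup>2) \<le> norm ((C^2 * (1/min 1 c)) * inverse (1+p^2))"
        using n c pp by (simp add: mult.assoc)
    qed
  qed
qed

lemma rc_meas[measurable]: "rhocheck_hat m \<in> borel_measurable borel"
  unfolding rhocheck_hat_def by measurable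

lemma G:
  fixes w0 w1 w2 \<gamma>0 \<gamma>1 \<gamma>2 :: complex and b m :: real
  assumes m: "m > 0" and g: "\<gamma>0 \<in> D m" "\<gamma>1 \<in> D m" "\<gamma>2 \<in> D m" and b: "b \<noteq> 0"
  defines "H \<equiv> \<lambda>p. (w0 / (complex_of_real (p^2+4*m^2) - \<gamma>0) + w1 / (complex_of_real (p^2+4*m^2) - \<gamma>1)
      + w2 / (complex_of_real (p^2+4*m^2) - \<gamma>2)) * rhocheck_hat m p / complex_of_real b"
  shows "W22_hat H" "inv_fourier H 0 = (w0 * J m \<gamma>0 + w1 * J m \<gamma>1 + w2 * J m \<gamma>2) / complex_of_real b"
proof -
  define c where "c = 4*m^2"
  have c: "c > 0" using m c_def by simp
  define R where "R = (\<lambda>\<gamma> p. rhocheck_hat m p / (complex_of_real (p^2+4*m^2) - \<gamma>))"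
  have Hp: "H = (\<lambda>p. (w0 * R \<gamma>0 p + w1 * R \<gamma>1 p + w2 * R \<gamma>2 p) / complex_of_real b)"
    unfolding H_def R_def by (rule ext) (simp add: algebra_simps)
  have Hm: "H \<in> borel_measurable borel" unfolding H_def by measurable
  have iR: "integrable lborel (R \<gamma>)" "integral\<^sup>L lborel (R \<gamma>) = 2 * pi * J m \<gamma>" if "\<gamma> \<in> D m" for \<gamma>
    using INT[OF m that] unfolding R_def by auto
  have "integral\<^sup>L lborel H = (w0 * (2 * pi * J m \<gamma>0) + w1 * (2 * pi * J m \<gamma>1) + w2 * (2 * pi * J m \<gamma>2)) / complex_of_real b"
    unfolding Hp using iR[OF g(1)] iR[OF g(2)] iR[OF g(3)]
    by (simp add: Bochner_Integration.integral_add integrable_mult_right)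
  moreover show "inv_fourier H 0 = (w0 * J m \<gamma>0 + w1 * J m \<gamma>1 + w2 * J m \<gamma>2) / complex_of_real b"
  proof -
    have "complex_of_real pi \<noteq> 0" "complex_of_real b \<noteq> 0" using b by auto
    then show ?thesis using \<open>integral\<^sup>L lborel H = _\<close>
      unfolding inv_fourier_def by (simp add: field_simps)
  qed
  obtain e0 where e0: "e0 > 0" "\<And>M. c \<le> M \<Longrightarrow> e0 * M \<le> norm (complex_of_real M - \<gamma>0)"
    using dist_D[OF m g(1)] c_def by auto
  obtain e1 where e1: "e1 > 0" "\<And>M. c \<le> M \<Longrightarrow> e1 * M \<le> norm (complex_of_real M - \<gamma>1)"
    using dist_D[OF m g(2)] c_def by auto
  obtain e2 where e2: "e2 > 0" "\<And>M. c \<le> M \<Longrightarrow> e2 * M \<le> norm (complex_of_real M - \<gamma>2)"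
    using dist_D[OF m g(3)] c_def by auto
  define E where "E = min e0 (min e1 e2)"
  have E: "E > 0" using e0 e1 e2 E_def by simp
  have Eb: "E * M \<le> norm (complex_of_real M - \<gamma>)" if "c \<le> M" "\<gamma> \<in> {\<gamma>0, \<gamma>1, \<gamma>2}" for M \<gamma>
  proof -
    have "M \<ge> 0" using that c by simp
    then have "E * M \<le> e0 * M" "E * M \<le> e1 * M" "E * M \<le> e2 * M"
      unfolding E_def by (auto intro: mult_right_mono)
    then show ?thesis using that e0(2)[OF that(1)] e1(2)[OF that(1)] e2(2)[OF that(1)] by auto
  qed
  define W where "W = norm w0 + norm w1 + norm w2"
  define k where "k = min 1 c"
  have k: "k > 0" using c k_def by simp
  have tb: "norm (w / (complex_of_real M - \<gamma>)) \<le> norm w / (E * M)" if "c \<le> M" "\<gamma> \<in> {\<gamma>0, \<gamma>1, \<gamma>2}" for w M \<gamma>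
  proof -
    have "E * M > 0" using E c that by simp
    moreover have "E * M \<le> norm (complex_of_real M - \<gamma>)" using Eb[OF that] .
    ultimately have "0 < norm (complex_of_real M - \<gamma>) * (E * M)"
      by (metis mult_pos_pos order_less_le_trans)
    then show ?thesis unfolding norm_divide using Eb[OF that] by (intro divide_left_mono) auto
  qed
  show "W22_hat H"
  proof (rule W22_crit[OF c Hm])
    fix p :: real
    let ?M = "p^2+c"
    let ?z = "complex_of_real ?M"
    have M: "c \<le> ?M" "?M > 0" using c by (auto intro: add_nonneg_pos)
    have EM: "E * ?M > 0" using E M by simp
    have s: "norm (w0 / (?z - \<gamma>0) + w1 / (?z - \<gamma>1) + w2 / (?z - \<gamma>2)) \<le> W / (E * ?M)"
    proof -
      have "norm (w0 / (?z - \<gamma>0) + w1 / (?z - \<gamma>1) + w2 / (?z - \<gamma>2))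
        \<le> norm (w0 / (?z - \<gamma>0)) + norm (w1 / (?z - \<gamma>1)) + norm (w2 / (?z - \<gamma>2))"
        by (meson norm_triangle_le order_trans add_mono order_refl)
      also have "\<dots> \<le> norm w0 / (E * ?M) + norm w1 / (E * ?M) + norm w2 / (E * ?M)"
        using tb[OF M(1)] by (intro add_mono) auto
      also have "\<dots> = W / (E * ?M)" unfolding W_def by (simp add: add_divide_distrib)
      finally show ?thesis .
    qed
    have W0: "0 \<le> W / (E * ?M)" using EM unfolding W_def by simp
    have r: "norm (rhocheck_hat m p) \<le> \<bar>p\<bar> / (8*pi*?M)" using rc_bound[OF m, of p] c_def by simp
    have Hp': "H p = (w0 / (?z - \<gamma>0) + w1 / (?z - \<gamma>1) + w2 / (?z - \<gamma>2)) * rhocheck_hat m p / complex_of_real b"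
      unfolding H_def c_def by simp
    have "norm (H p) \<le> (W / (E * ?M)) * (\<bar>p\<bar> / (8*pi*?M)) / \<bar>b\<bar>"
      unfolding Hp' norm_divide norm_mult norm_of_real
      using s r b W0 by (intro divide_right_mono mult_mono) auto
    then have "norm (H p) * (1+p^2) \<le> (W / (E * ?M)) * (\<bar>p\<bar> / (8*pi*?M)) / \<bar>b\<bar> * (?M / k)"
    proof (rule mult_mono)
      show "1 + p^2 \<le> ?M / k" using aux_k[OF c, of p] k unfolding k_def by (simp add: pos_le_divide_eq mult.commute)
    next
      show "0 \<le> (W / (E * ?M)) * (\<bar>p\<bar> / (8*pi*?M)) / \<bar>b\<bar>"
        using W0 M E unfolding W_def by (intro divide_nonneg_nonneg mult_nonneg_nonneg) auto
    qed (use M k in auto)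
    also have "\<dots> = (W / (8*pi*E*\<bar>b\<bar>*k)) * \<bar>p\<bar> / ?M"
    proof -
      have "\<And>X B a. X > 0 \<Longrightarrow> B > 0 \<Longrightarrow> (W / (E * X)) * (a / (8*pi*X)) / B * (X / k) = (W / (8*pi*E*B*k)) * a / X"
        using k E pi_gt_zero by (simp add: field_simps power2_eq_square)
      then show ?thesis using M b by simp
    qed
    finally show "norm (H p) * (1+p^2) \<le> (W / (8*pi*E*\<bar>b\<bar>*k)) * \<bar>p\<bar> / (p^2+c)" .
  qed
qed

lemma sum3_frac:
  fixes N0 N1 N2 D0 D1 D2 b :: "'a::field"
  assumes "D0 \<noteq> 0" "D1 \<noteq> 0" "D2 \<noteq> 0" "N0*D1*D2 + N1*D0*D2 + N2*D0*D1 = b*(D0*D1*D2)"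
  shows "N0/D0+N1/D1+N2/D2 = b"
  using assms by (simp add: field_simps)
lemma F2:
  fixes g0 g1 g2 b0 b1 b2 :: complex
  assumes "g0 \<noteq> g1" "g0 \<noteq> g2" "g1 \<noteq> g2"
  shows "(b0+b1*g0+b2*g0^2)/((g0-g1)*(g0-g2)) + (b0+b1*g1+b2*g1^2)/((g1-g0)*(g1-g2)) + (b0+b1*g2+b2*g2^2)/((g2-g0)*(g2-g1)) = b2"
  by (rule sum3_frac; (use assms in simp; fail)?; algebra)
lemma F1:
  fixes g0 g1 g2 b0 b1 b2 :: complex
  assumes "g0 \<noteq> g1" "g0 \<noteq> g2" "g1 \<noteq> g2"
  shows "(g0-(g0+g1+g2))*(b0+b1*g0+b2*g0^2)/((g0-g1)*(g0-g2)) + (g1-(g0+g1+g2))*(b0+b1*g1+b2*g1^2)/((g1-g0)*(g1-g2)) + (g2-(g0+g1+g2))*(b0+b1*g2+b2*g2^2)/((g2-g0)*(g2-g1)) = b1"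
  by (rule sum3_frac; (use assms in simp; fail)?; algebra)
lemma F0:
  fixes g0 g1 g2 b0 b1 b2 :: complex
  assumes "g0 \<noteq> g1" "g0 \<noteq> g2" "g1 \<noteq> g2" "g0 \<noteq> 0" "g1 \<noteq> 0" "g2 \<noteq> 0"
  shows "(g1*g2)*(b0+b1*g0+b2*g0^2)/((g0-g1)*(g0-g2)) + (g0*g2)*(b0+b1*g1+b2*g1^2)/((g1-g0)*(g1-g2)) + (g0*g1)*(b0+b1*g2+b2*g2^2)/((g2-g0)*(g2-g1)) = b0"
  by (rule sum3_frac; (use assms in simp; fail)?; algebra)
lemma L1g:
  fixes z g0 g1 g2 a1 a2 e0 e1 e2 d0 d1 d2 :: complex
  assumes "e0 \<noteq> 0" "e1 \<noteq> 0" "e2 \<noteq> 0" "d0 \<noteq> 0" "d1 \<noteq> 0" "d2 \<noteq> 0"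
    "e0 = z - g0" "e1 = z - g1" "e2 = z - g2" "d0 = (g0-g1)*(g0-g2)" "d1 = (g1-g0)*(g1-g2)" "d2 = (g2-g0)*(g2-g1)"
  shows "z*(z-a1)*(z-a2)/(e0*e1*e2) - 1 =
     (g0*(g0-a1)*(g0-a2)/d0)/e0 + (g1*(g1-a1)*(g1-a2)/d1)/e1 + (g2*(g2-a1)*(g2-a2)/d2)/e2"
  apply (simp add: field_simps assms(1-6))
  using assms(7-12) by algebra
lemma L2g:
  fixes z g0 g1 g2 a1 a2 e0 e1 e2 d0 d1 d2 :: complex
  assumes "e0 \<noteq> 0" "e1 \<noteq> 0" "e2 \<noteq> 0" "d0 \<noteq> 0" "d1 \<noteq> 0" "d2 \<noteq> 0" "z \<noteq> 0"
    "e0 = z - g0" "e1 = z - g1" "e2 = z - g2" "d0 = (g0-g1)*(g0-g2)" "d1 = (g1-g0)*(g1-g2)" "d2 = (g2-g0)*(g2-g1)"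
  shows "- ((z*(g0*g1+g0*g2+g1*g2) - g0*g1*g2)/z^2) * (z*(z-a1)*(z-a2)/(e0*e1*e2)) + a1*a2/z =
     (g0-(g0+g1+g2))*(g0*(g0-a1)*(g0-a2)/d0)/e0 + (g1-(g0+g1+g2))*(g1*(g1-a1)*(g1-a2)/d1)/e1 + (g2-(g0+g1+g2))*(g2*(g2-a1)*(g2-a2)/d2)/e2"
  apply (simp add: field_simps assms(1-7))
  using assms(8-13) by algebra
lemma L0g:
  fixes z g0 g1 g2 a1 a2 e0 e1 e2 d0 d1 d2 :: complex
  assumes "e0 \<noteq> 0" "e1 \<noteq> 0" "e2 \<noteq> 0" "d0 \<noteq> 0" "d1 \<noteq> 0" "d2 \<noteq> 0" "z \<noteq> 0"
    "e0 = z - g0" "e1 = z - g1" "e2 = z - g2" "d0 = (g0-g1)*(g0-g2)" "d1 = (g1-g0)*(g1-g2)" "d2 = (g2-g0)*(g2-g1)"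
  shows "- ((- (g0*g1*g2))/z) * (z*(z-a1)*(z-a2)/(e0*e1*e2)) =
     (g1*g2)*(g0*(g0-a1)*(g0-a2)/d0)/e0 + (g0*g2)*(g1*(g1-a1)*(g1-a2)/d1)/e1 + (g0*g1)*(g2*(g2-a1)*(g2-a2)/d2)/e2"
  apply (simp add: field_simps assms(1-7))
  using assms(8-13) by algebra

lemma L1e:
  fixes z g0 g1 g2 a1 a2 :: complex
  assumes "g0 \<noteq> g1" "g0 \<noteq> g2" "g1 \<noteq> g2" "z \<noteq> g0" "z \<noteq> g1" "z \<noteq> g2"
  shows "z*(z-a1)*(z-a2)/((z-g0)*(z-g1)*(z-g2)) - 1 =
     (g0*(g0-a1)*(g0-a2)/((g0-g1)*(g0-g2)))/(z-g0) + (g1*(g1-a1)*(g1-a2)/((g1-g0)*(g1-g2)))/(z-g1)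
     + (g2*(g2-a1)*(g2-a2)/((g2-g0)*(g2-g1)))/(z-g2)"
  by (rule L1g) (use assms in auto)

lemma L2e:
  fixes z g0 g1 g2 a1 a2 :: complex
  assumes "g0 \<noteq> g1" "g0 \<noteq> g2" "g1 \<noteq> g2" "z \<noteq> g0" "z \<noteq> g1" "z \<noteq> g2" "z \<noteq> 0"
  shows "- ((z*(g0*g1+g0*g2+g1*g2) - g0*g1*g2)/z^2) * (z*(z-a1)*(z-a2)/((z-g0)*(z-g1)*(z-g2))) + a1*a2/z =
     (g0-(g0+g1+g2))*(g0*(g0-a1)*(g0-a2)/((g0-g1)*(g0-g2)))/(z-g0) + (g1-(g0+g1+g2))*(g1*(g1-a1)*(g1-a2)/((g1-g0)*(g1-g2)))/(z-g1)
     + (g2-(g0+g1+g2))*(g2*(g2-a1)*(g2-a2)/((g2-g0)*(g2-g1)))/(z-g2)"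
  by (rule L2g) (use assms in auto)

lemma L0e:
  fixes z g0 g1 g2 a1 a2 :: complex
  assumes "g0 \<noteq> g1" "g0 \<noteq> g2" "g1 \<noteq> g2" "z \<noteq> g0" "z \<noteq> g1" "z \<noteq> g2" "z \<noteq> 0"
  shows "- ((- (g0*g1*g2))/z) * (z*(z-a1)*(z-a2)/((z-g0)*(z-g1)*(z-g2))) =
     (g1*g2)*(g0*(g0-a1)*(g0-a2)/((g0-g1)*(g0-g2)))/(z-g0) + (g0*g2)*(g1*(g1-a1)*(g1-a2)/((g1-g0)*(g1-g2)))/(z-g1)
     + (g0*g1)*(g2*(g2-a1)*(g2-a2)/((g2-g0)*(g2-g1)))/(z-g2)"
  by (rule L0g) (use assms in auto)

lemma J_cnj: "J m (cnj z) = cnj (J m z)"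
proof -
  have "cnj (J m z) = (LINT x|lborel. cnj (indicator {4*m^2..} x *\<^sub>R (complex_of_real (rho m x) / (complex_of_real x - z))))"
    unfolding J_def set_lebesgue_integral_def by (rule Bochner_Integration.integral_cnj[symmetric])
  also have "\<dots> = J m (cnj z)"
    unfolding J_def set_lebesgue_integral_def
    by (rule Bochner_Integration.integral_cong) (auto simp: scaleR_conv_of_real)
  finally show ?thesis by simp
qed

lemma D_cnj: "z \<in> D m \<Longrightarrow> cnj z \<in> D m"
  unfolding D_def by auto

theorem proposition4p7:
  fixes m a1 a2 b0 b1 b2 :: real and \<gamma>0 \<gamma>1 \<gamma>2 :: complex
  assumes "m > 0" and "b0 \<noteq> 0" and "b1 \<noteq> 0" and "b2 \<noteq> 0"
    and "distinct [\<gamma>0, \<gamma>1, \<gamma>2]"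
    and "{\<gamma> \<in> D m. \<gamma> * (of_real a1 - \<gamma>) * (of_real a2 - \<gamma>) * J m \<gamma>
            = of_real b0 + of_real b1 * \<gamma> + of_real b2 * \<gamma>^2} = {\<gamma>0, \<gamma>1, \<gamma>2}"
  defines "\<beta>0 \<equiv> - (\<gamma>0 * \<gamma>1 * \<gamma>2)"
    and "\<beta>1 \<equiv> \<gamma>0 * \<gamma>1 + \<gamma>0 * \<gamma>2 + \<gamma>1 * \<gamma>2"
    and "\<beta>2 \<equiv> - (\<gamma>0 + \<gamma>1 + \<gamma>2)"
  defines "P \<equiv> \<lambda>M::real. (of_real M)^3 + \<beta>2 * (of_real M)^2 + \<beta>1 * of_real M + \<beta>0"
  defines "h2 \<equiv> \<lambda>p::real. let M = p^2 + 4 * m^2 in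
              ((of_real (M * (M - a1) * (M - a2))) / P M - 1) * rhocheck_hat m p / of_real b2"
  defines "h1 \<equiv> \<lambda>p::real. let M = p^2 + 4 * m^2 in
              (- ((of_real M * \<beta>1 + \<beta>0) / of_real (M^2)) * (rhocheck_hat m p + of_real b2 * h2 p)
               + of_real (a1 * a2 / M) * rhocheck_hat m p) / of_real b1"
  defines "h0 \<equiv> \<lambda>p::real. let M = p^2 + 4 * m^2 in
              (- (\<beta>0 / of_real M) * (rhocheck_hat m p + of_real b2 * h2 p)) / of_real b0"
  shows "\<beta>0 \<in> \<real> \<and> \<beta>1 \<in> \<real> \<and> \<beta>2 \<in> \<real>
     \<and> (\<forall>M::real. 4 * m^2 \<le> M \<longrightarrow> P M \<noteq> 0)
     \<and> W22_hat h0 \<and> W22_hat h1 \<and> W22_hat h2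
     \<and> inv_fourier h0 0 = 1 \<and> inv_fourier h1 0 = 1 \<and> inv_fourier h2 0 = 1"
proof -
  note m = assms(1)
  define c where "c = 4*m^2"
  have c: "c > 0" using m c_def by simp
  define E where "E = (\<lambda>\<gamma>. \<gamma> * (of_real a1 - \<gamma>) * (of_real a2 - \<gamma>) * J m \<gamma>
            = of_real b0 + of_real b1 * \<gamma> + of_real b2 * \<gamma>^2)"
  have S: "{\<gamma> \<in> D m. E \<gamma>} = {\<gamma>0, \<gamma>1, \<gamma>2}" using assms(6) unfolding E_def .
  have dist: "\<gamma>0 \<noteq> \<gamma>1" "\<gamma>0 \<noteq> \<gamma>2" "\<gamma>1 \<noteq> \<gamma>2" using assms(5) by auto
  have gD: "\<gamma>0 \<in> D m" "\<gamma>1 \<in> D m" "\<gamma>2 \<in> D m" using S by auto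
  have gE: "E \<gamma>0" "E \<gamma>1" "E \<gamma>2" using S by auto
  have nz: "\<gamma> \<noteq> 0" if "E \<gamma>" for \<gamma>
    using that assms(2) unfolding E_def by auto
  have g0: "\<gamma>0 \<noteq> 0" "\<gamma>1 \<noteq> 0" "\<gamma>2 \<noteq> 0" using nz gE by auto
  have Ecnj: "E (cnj \<gamma>)" if "E \<gamma>" for \<gamma>
  proof -
    have "cnj (\<gamma> * (of_real a1 - \<gamma>) * (of_real a2 - \<gamma>) * J m \<gamma>)
        = cnj (of_real b0 + of_real b1 * \<gamma> + of_real b2 * \<gamma>^2)"
      using that unfolding E_def by simp
    then show ?thesis unfolding E_def by (simp add: J_cnj)
  qed
  define S3 where "S3 = {\<gamma>0, \<gamma>1, \<gamma>2}"
  have cS: "cnj ` S3 = S3"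
  proof
    show "cnj ` S3 \<subseteq> S3" unfolding S3_def S[symmetric] using Ecnj D_cnj by auto
    then show "S3 \<subseteq> cnj ` S3" by (metis complex_cnj_cnj image_eqI subsetD subsetI)
  qed
  have inj: "inj_on cnj S3" by (rule inj_onI) simp
  have sum_c: "cnj (\<Sum>x\<in>S3. f x) = (\<Sum>x\<in>S3. f x)" if "\<And>x. cnj (f x) = f (cnj x)" for f
  proof -
    have "cnj (\<Sum>x\<in>S3. f x) = (\<Sum>x\<in>S3. f (cnj x))" by (simp add: that)
    also have "\<dots> = (\<Sum>x\<in>cnj ` S3. f x)" by (simp add: sum.reindex[OF inj])
    finally show ?thesis using cS by simp
  qed
  have prod_c: "cnj (\<Prod>x\<in>S3. x) = (\<Prod>x\<in>S3. x)"
  proof -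
    have "cnj (\<Prod>x\<in>S3. x) = (\<Prod>x\<in>S3. cnj x)" by simp
    also have "\<dots> = (\<Prod>x\<in>cnj ` S3. x)" by (simp add: prod.reindex[OF inj])
    finally show ?thesis using cS by simp
  qed
  have s1: "(\<Sum>x\<in>S3. x) = \<gamma>0 + \<gamma>1 + \<gamma>2" unfolding S3_def using dist by simp
  have s2: "(\<Sum>x\<in>S3. x^2) = \<gamma>0^2 + \<gamma>1^2 + \<gamma>2^2" unfolding S3_def using dist by simp
  have p1: "(\<Prod>x\<in>S3. x) = \<gamma>0 * \<gamma>1 * \<gamma>2" unfolding S3_def using dist by (simp add: mult.assoc)
  have cs1: "cnj (\<gamma>0 + \<gamma>1 + \<gamma>2) = \<gamma>0 + \<gamma>1 + \<gamma>2" using sum_c[of "\<lambda>x. x"] s1 by simp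
  have cs2: "cnj (\<gamma>0^2 + \<gamma>1^2 + \<gamma>2^2) = \<gamma>0^2 + \<gamma>1^2 + \<gamma>2^2" using sum_c[of "\<lambda>x. x^2"] s2 by simp
  have cp1: "cnj (\<gamma>0 * \<gamma>1 * \<gamma>2) = \<gamma>0 * \<gamma>1 * \<gamma>2" using prod_c p1 by simp
  have b1eq: "\<beta>1 = ((\<gamma>0 + \<gamma>1 + \<gamma>2)^2 - (\<gamma>0^2 + \<gamma>1^2 + \<gamma>2^2)) / 2"
    unfolding \<beta>1_def by (simp add: field_simps power2_eq_square)
  have R0: "\<beta>0 \<in> \<real>" unfolding Reals_cnj_iff \<beta>0_def using cp1 by simp
  have R2: "\<beta>2 \<in> \<real>" unfolding Reals_cnj_iff \<beta>2_def complex_cnj_minus cs1 ..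
  have R1: "\<beta>1 \<in> \<real>" unfolding Reals_cnj_iff b1eq using cs1 cs2 by simp
  have Pf: "P M = (of_real M - \<gamma>0) * (of_real M - \<gamma>1) * (of_real M - \<gamma>2)" for M
    unfolding P_def \<beta>0_def \<beta>1_def \<beta>2_def by algebra
  have notD: "complex_of_real M \<notin> D m" if "4*m^2 \<le> M" for M
    using that unfolding D_def by auto
  have zne: "complex_of_real M \<noteq> \<gamma>0" "complex_of_real M \<noteq> \<gamma>1" "complex_of_real M \<noteq> \<gamma>2" if "4*m^2 \<le> M" for M
    using notD[OF that] gD by auto
  have Pnz: "\<forall>M::real. 4 * m^2 \<le> M \<longrightarrow> P M \<noteq> 0"
    using zne unfolding Pf by auto
  define a1' where "a1' = complex_of_real a1"
  define a2' where "a2' = complex_of_real a2"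
  define A0 where "A0 = \<gamma>0*(\<gamma>0-a1')*(\<gamma>0-a2')/((\<gamma>0-\<gamma>1)*(\<gamma>0-\<gamma>2))"
  define A1 where "A1 = \<gamma>1*(\<gamma>1-a1')*(\<gamma>1-a2')/((\<gamma>1-\<gamma>0)*(\<gamma>1-\<gamma>2))"
  define A2 where "A2 = \<gamma>2*(\<gamma>2-a1')*(\<gamma>2-a2')/((\<gamma>2-\<gamma>0)*(\<gamma>2-\<gamma>1))"
  define s where "s = \<gamma>0+\<gamma>1+\<gamma>2"
  have rcz: "rhocheck_hat m p + of_real b2 * h2 p = (complex_of_real ((p^2+4*m^2) * ((p^2+4*m^2) - a1) * ((p^2+4*m^2) - a2)) / P (p^2+4*m^2)) * rhocheck_hat m p" for p
  proof -
    have key: "r + complex_of_real b2 * (t / complex_of_real b2) = r + t" for r t using assms(4) by simp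
    show ?thesis unfolding h2_def Let_def key by (simp add: algebra_simps)
  qed
  have pw: "complex_of_real ((p^2+4*m^2) * ((p^2+4*m^2) - a1) * ((p^2+4*m^2) - a2)) / P (p^2+4*m^2)
     = z*(z-a1')*(z-a2')/((z-\<gamma>0)*(z-\<gamma>1)*(z-\<gamma>2))" if "z = complex_of_real (p^2+4*m^2)" for p z
    unfolding that Pf a1'_def a2'_def by simp
  have Mge: "4*m^2 \<le> p^2+4*m^2" for p :: real by simp
  have z0: "complex_of_real (p^2+4*m^2) \<noteq> 0" for p :: real
    using c c_def by (metis Mge add_nonneg_pos of_real_eq_0_iff zero_le_power2 order.strict_iff_not)
  have h2e: "h2 = (\<lambda>p. (A0 / (complex_of_real (p^2+4*m^2) - \<gamma>0) + A1 / (complex_of_real (p^2+4*m^2) - \<gamma>1)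
      + A2 / (complex_of_real (p^2+4*m^2) - \<gamma>2)) * rhocheck_hat m p / complex_of_real b2)"
  proof (rule ext)
    fix p :: real
    let ?z = "complex_of_real (p^2+4*m^2)"
    have "h2 p = (complex_of_real ((p^2+4*m^2) * ((p^2+4*m^2) - a1) * ((p^2+4*m^2) - a2)) / P (p^2+4*m^2) - 1) * rhocheck_hat m p / complex_of_real b2"
      unfolding h2_def Let_def by (rule refl)
    also have "\<dots> = (?z*(?z-a1')*(?z-a2')/((?z-\<gamma>0)*(?z-\<gamma>1)*(?z-\<gamma>2)) - 1) * rhocheck_hat m p / complex_of_real b2"
      by (simp only: pw[OF refl])
    also have "\<dots> = (A0 / (?z - \<gamma>0) + A1 / (?z - \<gamma>1) + A2 / (?z - \<gamma>2)) * rhocheck_hat m p / complex_of_real b2"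
      unfolding A0_def A1_def A2_def using L1e[OF dist zne[OF Mge]] by simp
    finally show "h2 p = (A0 / (?z - \<gamma>0) + A1 / (?z - \<gamma>1) + A2 / (?z - \<gamma>2)) * rhocheck_hat m p / complex_of_real b2" .
  qed
  have h1e: "h1 = (\<lambda>p. ((\<gamma>0-s)*A0 / (complex_of_real (p^2+4*m^2) - \<gamma>0) + (\<gamma>1-s)*A1 / (complex_of_real (p^2+4*m^2) - \<gamma>1)
      + (\<gamma>2-s)*A2 / (complex_of_real (p^2+4*m^2) - \<gamma>2)) * rhocheck_hat m p / complex_of_real b1)"
  proof (rule ext)
    fix p :: real
    define z where "z = complex_of_real (p^2+4*m^2)"
    define Y where "Y = z*(z-a1')*(z-a2')/((z-\<gamma>0)*(z-\<gamma>1)*(z-\<gamma>2))"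
    define r where "r = rhocheck_hat m p"
    have z2: "complex_of_real ((p^2+4*m^2)^2) = z^2" unfolding z_def by simp
    have za: "complex_of_real (a1 * a2 / (p^2+4*m^2)) = a1'*a2'/z" unfolding z_def a1'_def a2'_def by simp
    have X: "z * \<beta>1 + \<beta>0 = z*(\<gamma>0*\<gamma>1+\<gamma>0*\<gamma>2+\<gamma>1*\<gamma>2) - \<gamma>0*\<gamma>1*\<gamma>2" unfolding \<beta>0_def \<beta>1_def by simp
    have "h1 p = (- ((z * \<beta>1 + \<beta>0) / z^2) * (Y * r) + (a1'*a2'/z) * r) / complex_of_real b1"
      unfolding h1_def Let_def rcz pw[OF z_def] z_def[symmetric] Y_def[symmetric] r_def[symmetric] z2 za by (rule refl)
    also have "\<dots> = ((- ((z*(\<gamma>0*\<gamma>1+\<gamma>0*\<gamma>2+\<gamma>1*\<gamma>2) - \<gamma>0*\<gamma>1*\<gamma>2)/z^2) * Y + a1'*a2'/z) * r) / complex_of_real b1"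
      unfolding X by (simp add: algebra_simps)
    also have "\<dots> = ((\<gamma>0-s)*A0 / (z - \<gamma>0) + (\<gamma>1-s)*A1 / (z - \<gamma>1) + (\<gamma>2-s)*A2 / (z - \<gamma>2)) * r / complex_of_real b1"
      unfolding A0_def A1_def A2_def s_def Y_def
      by (subst L2e[of \<gamma>0 \<gamma>1 \<gamma>2 z a1' a2', OF dist zne[OF Mge[of p], folded z_def] z0[of p, folded z_def]]) (rule refl)
    finally show "h1 p = ((\<gamma>0-s)*A0 / (complex_of_real (p^2+4*m^2) - \<gamma>0) + (\<gamma>1-s)*A1 / (complex_of_real (p^2+4*m^2) - \<gamma>1)
      + (\<gamma>2-s)*A2 / (complex_of_real (p^2+4*m^2) - \<gamma>2)) * rhocheck_hat m p / complex_of_real b1"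
      unfolding z_def r_def .
  qed
  have h0e: "h0 = (\<lambda>p. ((\<gamma>1*\<gamma>2)*A0 / (complex_of_real (p^2+4*m^2) - \<gamma>0) + (\<gamma>0*\<gamma>2)*A1 / (complex_of_real (p^2+4*m^2) - \<gamma>1)
      + (\<gamma>0*\<gamma>1)*A2 / (complex_of_real (p^2+4*m^2) - \<gamma>2)) * rhocheck_hat m p / complex_of_real b0)"
  proof (rule ext)
    fix p :: real
    define z where "z = complex_of_real (p^2+4*m^2)"
    define Y where "Y = z*(z-a1')*(z-a2')/((z-\<gamma>0)*(z-\<gamma>1)*(z-\<gamma>2))"
    define r where "r = rhocheck_hat m p"
    have "h0 p = (- (\<beta>0 / z) * (Y * r)) / complex_of_real b0"
      unfolding h0_def Let_def rcz pw[OF z_def] z_def[symmetric] Y_def[symmetric] r_def[symmetric] by (rule refl)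
    also have "\<dots> = ((- ((- (\<gamma>0*\<gamma>1*\<gamma>2))/z) * Y) * r) / complex_of_real b0"
      unfolding \<beta>0_def by (simp add: algebra_simps)
    also have "\<dots> = ((\<gamma>1*\<gamma>2)*A0 / (z - \<gamma>0) + (\<gamma>0*\<gamma>2)*A1 / (z - \<gamma>1) + (\<gamma>0*\<gamma>1)*A2 / (z - \<gamma>2)) * r / complex_of_real b0"
      unfolding A0_def A1_def A2_def Y_def
      by (subst L0e[of \<gamma>0 \<gamma>1 \<gamma>2 z a1' a2', OF dist zne[OF Mge[of p], folded z_def] z0[of p, folded z_def]]) (rule refl)
    finally show "h0 p = ((\<gamma>1*\<gamma>2)*A0 / (complex_of_real (p^2+4*m^2) - \<gamma>0) + (\<gamma>0*\<gamma>2)*A1 / (complex_of_real (p^2+4*m^2) - \<gamma>1)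
      + (\<gamma>0*\<gamma>1)*A2 / (complex_of_real (p^2+4*m^2) - \<gamma>2)) * rhocheck_hat m p / complex_of_real b0"
      unfolding z_def r_def .
  qed
  define Rf where "Rf = (\<lambda>\<gamma>. complex_of_real b0 + complex_of_real b1 * \<gamma> + complex_of_real b2 * \<gamma>^2)"
  have AJ: "\<gamma>*(\<gamma>-a1')*(\<gamma>-a2') * J m \<gamma> = Rf \<gamma>" if "E \<gamma>" for \<gamma>
  proof -
    have eq: "\<gamma>*(\<gamma>-a1')*(\<gamma>-a2') = \<gamma> * (of_real a1 - \<gamma>) * (of_real a2 - \<gamma>)" unfolding a1'_def a2'_def by algebra
    show ?thesis unfolding eq Rf_def using that unfolding E_def .
  qed
  have AJ0: "A0 * J m \<gamma>0 = Rf \<gamma>0 / ((\<gamma>0-\<gamma>1)*(\<gamma>0-\<gamma>2))" unfolding A0_def using AJ[OF gE(1)] by (simp add: field_simps)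
  have AJ1: "A1 * J m \<gamma>1 = Rf \<gamma>1 / ((\<gamma>1-\<gamma>0)*(\<gamma>1-\<gamma>2))" unfolding A1_def using AJ[OF gE(2)] by (simp add: field_simps)
  have AJ2: "A2 * J m \<gamma>2 = Rf \<gamma>2 / ((\<gamma>2-\<gamma>0)*(\<gamma>2-\<gamma>1))" unfolding A2_def using AJ[OF gE(3)] by (simp add: field_simps)
  have bnz: "complex_of_real b0 \<noteq> 0" "complex_of_real b1 \<noteq> 0" "complex_of_real b2 \<noteq> 0" using assms(2-4) by auto
  note GG = G[OF m gD(1) gD(2) gD(3)]
  have V2: "inv_fourier h2 0 = 1"
  proof -
    have "inv_fourier h2 0 = (A0 * J m \<gamma>0 + A1 * J m \<gamma>1 + A2 * J m \<gamma>2) / complex_of_real b2"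
      unfolding h2e by (rule GG(2)[OF assms(4)])
    also have "\<dots> = complex_of_real b2 / complex_of_real b2"
      unfolding AJ0 AJ1 AJ2 Rf_def using F2[OF dist] by simp
    finally show ?thesis using bnz by simp
  qed
  have V1: "inv_fourier h1 0 = 1"
  proof -
    have "inv_fourier h1 0 = ((\<gamma>0-s)*A0 * J m \<gamma>0 + (\<gamma>1-s)*A1 * J m \<gamma>1 + (\<gamma>2-s)*A2 * J m \<gamma>2) / complex_of_real b1"
      unfolding h1e by (rule GG(2)[OF assms(3)])
    also have "\<dots> = ((\<gamma>0-s)*(A0 * J m \<gamma>0) + (\<gamma>1-s)*(A1 * J m \<gamma>1) + (\<gamma>2-s)*(A2 * J m \<gamma>2)) / complex_of_real b1"
      by (simp add: mult.assoc)
    also have "\<dots> = complex_of_real b1 / complex_of_real b1"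
      unfolding AJ0 AJ1 AJ2 Rf_def s_def using F1[OF dist] by (simp add: times_divide_eq_right)
    finally show ?thesis using bnz by simp
  qed
  have V0: "inv_fourier h0 0 = 1"
  proof -
    have "inv_fourier h0 0 = ((\<gamma>1*\<gamma>2)*A0 * J m \<gamma>0 + (\<gamma>0*\<gamma>2)*A1 * J m \<gamma>1 + (\<gamma>0*\<gamma>1)*A2 * J m \<gamma>2) / complex_of_real b0"
      unfolding h0e by (rule GG(2)[OF assms(2)])
    also have "\<dots> = ((\<gamma>1*\<gamma>2)*(A0 * J m \<gamma>0) + (\<gamma>0*\<gamma>2)*(A1 * J m \<gamma>1) + (\<gamma>0*\<gamma>1)*(A2 * J m \<gamma>2)) / complex_of_real b0"
      by (simp add: mult.assoc)
    also have "\<dots> = complex_of_real b0 / complex_of_real b0"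
      unfolding AJ0 AJ1 AJ2 Rf_def using F0[OF dist g0] by (simp add: times_divide_eq_right)
    finally show ?thesis using bnz by simp
  qed
  have W2: "W22_hat h2" unfolding h2e by (rule GG(1)[OF assms(4)])
  have W1: "W22_hat h1" unfolding h1e by (rule GG(1)[OF assms(3)])
  have W0: "W22_hat h0" unfolding h0e by (rule GG(1)[OF assms(2)])
  show ?thesis using R0 R1 R2 Pnz W0 W1 W2 V0 V1 V2 by blast
qed

end
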